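(* Let $k\in K\setminus\{\mathbf{0},\mathbf{1}\}$ and let $\varphi=\psi\,\widetilde{U}\,\xi$, or $\varphi=\square\psi$, or $\varphi=\psi U\xi$, with $\psi,\xi\in k\text{-}stLTL(K,AP)$. Then for every $w\in(\mathcal{P}(AP))^{\omega}$: $(\|\varphi\|,w)\geq k$ iff $w\models\varphi_{b}$.
   Context: $(K,+,\cdot,Val^{\omega},\mathbf{0},\mathbf{1})$ is an idempotent ordered totally generalized product $\omega$-valuation monoid: $(K,+,\mathbf{0})$ is a complete idempotent monoid whose natural order ($k\leq k'$ iff $k'=k'+k$) is total; $Val^{\omega}$ maps infinite sequences over finite subsets of $K$ to $K$, with $Val^{\omega}((k_i)_i)=\mathbf{0}$ whenever some $k_i=\mathbf{0}$ and $Val^{\omega}(\mathbf{1}^{\omega})=\mathbf{1}$; $\cdot$ has $\mathbf{0}$ absorbing and $\mathbf{1}$ neutral; $\sum_I(k\cdot\mathbf{1})=k\cdot\sum_I\mathbf{1}$; $Val^{\omega}$ distributes over finite sums $\sum_{i_j\in I_j}k_{i_j}$ (over finite $L\subseteq K$) whenever for each $j$ all $k_{i_j}$ lie in $L\setminus\{\mathbf{0},\mathbf{1}\}$ or all lie in $\{\mathbf{0},\mathbf{1}\}$. Moreover $Val^{\omega}(\mathbf{1},k_1,k_2,\ldots)=Val^{\omega}(k_1,k_2,\ldots)$, $k=Val^{\omega}(k,\mathbf{1},\mathbf{1},\ldots)$, $k\leq\mathbf{1}$ for all $k$, and $Val^{\omega}(k_0,k_1,\ldots)\geq k$ whenever $k_i\geq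 k$ for all $i$. $AP$ is a finite set of atomic propositions. Weighted LTL formulas over $AP$ and $K$ have semantics $\|\cdot\|$ in $K^{(\mathcal{P}(AP))^{\omega}}$: $(\|k'\|,w)=k'$; $(\|a\|,w)=\mathbf{1}$ if $a\in w(0)$ else $\mathbf{0}$ (dually for $\lnot a$); $\vee$ is $+$, $\wedge$ is $\cdot$; $(\|\bigcirc\varphi\|,w)=(\|\varphi\|,w_{\geq1})$; $(\|\varphi U\psi\|,w)=\sum_{i\geq0}Val^{\omega}((\|\varphi\|,w_{\geq0}),\ldots,(\|\varphi\|,w_{\geq i-1}),(\|\psi\|,w_{\geq i}),\mathbf{1},\mathbf{1},\ldots)$; $(\|\square\varphi\|,w)=Val^{\omega}((\|\varphi\|,w_{\geq i}))_{i\geq0}$; $\varphi\widetilde{U}\psi:=\square\varphi\vee(\varphi U\psi)$. $sbLTL(K,AP)$ is given by $\varphi::=true\mid a\mid\lnot a\mid\varphi\vee\varphi\mid\varphi\wedge\varphi\mid\bigcirc\varphi\mid\varphi\widetilde{U}\varphi\mid\square\varphi$ ($true=\mathbf{1}$); its semantics are $\{\mathbf{0},\mathbf{1}\}$-valued and coincide with classical LTL satisfaction. $k\text{-}stLTL(K,AP)$ consists of formulas $\bigvee_{1\leq i\leq n}(k_i\wedge\varphi_i)$ with $k_i\geq k$, $k_i\notin\{\mathbf{0},\mathbf{1}\}$, $\varphi_i\in sbLTL(K,AP)$. For such $\varphi$, $\varphi_b:=\bigvee_i\varphi_i$; for $\varphi=\psi\widetilde{U}\xi$, $\square\psi$, $\psi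 U\xi$ with $\psi,\xi\in k\text{-}stLTL(K,AP)$, $\varphi_b$ is respectively $\psi_b\widetilde{U}\xi_b$, $\square\psi_b$, $\psi_bU\xi_b$, read as classical LTL formulas, and $w\models\varphi_b$ means classical satisfaction at position 0. *)

theory Defs
  imports Main
begin

text \<open>
  The weight structure K is an idempotent complete monoid whose natural order is total.
  Its infinitary sum coincides with the supremum in the natural order, so we model K
  by a type of class complete_linorder with sum = Sup, 0 = bot; since k \<le> 1 for all k,
  1 = top.
\<close>

definition ioggpvm :: "('k::complete_linorder \<Rightarrow> 'k \<Rightarrow> 'k) \<Rightarrow> ((nat \<Rightarrow> 'k) \<Rightarrow> 'k) \<Rightarrow> bool" where
  "ioggpvm mult Val \<longleftrightarrow>
     (\<forall>f. finite (range f) \<longrightarrow> (\<exists>i. f i = bot) \<longrightarrow> Val f = bot)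
   \<and> Val (\<lambda>_. top) = top
   \<and> (\<forall>k. mult bot k = bot \<and> mult k bot = bot)
   \<and> (\<forall>k. mult top k = k \<and> mult k top = k)
   \<and> (\<forall>k (I::nat set). Sup ((\<lambda>i. mult k top) ` I) = mult k (Sup ((\<lambda>i. top) ` I)))
   \<and> (\<forall>(L::'k set) (A::nat \<Rightarrow> 'k set). finite L \<longrightarrow>
        (\<forall>j. A j \<subseteq> L \<and> (A j \<subseteq> L - {bot, top} \<or> A j \<subseteq> {bot, top})) \<longrightarrow>
        Val (\<lambda>j. Sup (A j)) = Sup {Val f | f. \<forall>j. f j \<in> A j})
   \<and> (\<forall>f. finite (range f) \<longrightarrow> Val (case_nat top f) = Val f)
   \<and> (\<forall>k. Val (case_nat k (\<lambda>_. top)) = k)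
   \<and> (\<forall>f k. finite (range f) \<longrightarrow> (\<forall>i. k \<le> f i) \<longrightarrow> k \<le> Val f)"

datatype ('a, 'k) wltl =
    Const 'k
  | Atom 'a
  | NAtom 'a
  | Or "('a, 'k) wltl" "('a, 'k) wltl"
  | And "('a, 'k) wltl" "('a, 'k) wltl"
  | Next "('a, 'k) wltl"
  | Until "('a, 'k) wltl" "('a, 'k) wltl"
  | Box "('a, 'k) wltl"

definition WUntil :: "('a, 'k) wltl \<Rightarrow> ('a, 'k) wltl \<Rightarrow> ('a, 'k) wltl" where
  "WUntil \<phi> \<psi> = Or (Box \<phi>) (Until \<phi> \<psi>)"

definition sfx :: "nat \<Rightarrow> (nat \<Rightarrow> 'a set) \<Rightarrow> (nat \<Rightarrow> 'a set)" where
  "sfx i w = (\<lambda>j. w (i + j))"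

fun sem :: "('k::complete_linorder \<Rightarrow> 'k \<Rightarrow> 'k) \<Rightarrow> ((nat \<Rightarrow> 'k) \<Rightarrow> 'k)
            \<Rightarrow> ('a, 'k) wltl \<Rightarrow> (nat \<Rightarrow> 'a set) \<Rightarrow> 'k" where
  "sem mult Val (Const c) w = c"
| "sem mult Val (Atom a) w = (if a \<in> w 0 then top else bot)"
| "sem mult Val (NAtom a) w = (if a \<in> w 0 then bot else top)"
| "sem mult Val (Or \<phi> \<psi>) w = sup (sem mult Val \<phi> w) (sem mult Val \<psi> w)"
| "sem mult Val (And \<phi> \<psi>) w = mult (sem mult Val \<phi> w) (sem mult Val \<psi> w)"
| "sem mult Val (Next \<phi>) w = sem mult Val \<phi> (sfx 1 w)"
| "sem mult Val (Until \<phi> \<psi>) w =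
     (SUP i. Val (\<lambda>j. if j < i then sem mult Val \<phi> (sfx j w)
                     else if j = i then sem mult Val \<psi> (sfx i w) else top))"
| "sem mult Val (Box \<phi>) w = Val (\<lambda>i. sem mult Val \<phi> (sfx i w))"

inductive sbLTL :: "('a, 'k::complete_linorder) wltl \<Rightarrow> bool" where
  "sbLTL (Const top)"
| "sbLTL (Atom a)"
| "sbLTL (NAtom a)"
| "sbLTL \<phi> \<Longrightarrow> sbLTL \<psi> \<Longrightarrow> sbLTL (Or \<phi> \<psi>)"
| "sbLTL \<phi> \<Longrightarrow> sbLTL \<psi> \<Longrightarrow> sbLTL (And \<phi> \<psi>)"
| "sbLTL \<phi> \<Longrightarrow> sbLTL (Next \<phi>)"
| "sbLTL \<phi> \<Longrightarrow> sbLTL \<psi> \<Longrightarrow> sbLTL (WUntil \<phi> \<psi>)"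
| "sbLTL \<phi> \<Longrightarrow> sbLTL (Box \<phi>)"

fun holds :: "('a, 'k::complete_linorder) wltl \<Rightarrow> (nat \<Rightarrow> 'a set) \<Rightarrow> bool" where
  "holds (Const c) w = (c = top)"
| "holds (Atom a) w = (a \<in> w 0)"
| "holds (NAtom a) w = (a \<notin> w 0)"
| "holds (Or \<phi> \<psi>) w = (holds \<phi> w \<or> holds \<psi> w)"
| "holds (And \<phi> \<psi>) w = (holds \<phi> w \<and> holds \<psi> w)"
| "holds (Next \<phi>) w = holds \<phi> (sfx 1 w)"
| "holds (Until \<phi> \<psi>) w = (\<exists>i. (\<forall>j<i. holds \<phi> (sfx j w)) \<and> holds \<psi> (sfx i w))"
| "holds (Box \<phi>) w = (\<forall>i. holds \<phi> (sfx i w))"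

text \<open>A k-stLTL formula \<Or>_{1\<le>i\<le>n} (k_i \<and> \<phi>_i) is given by the nonempty list [(k_1,\<phi>_1),...,(k_n,\<phi>_n)].\<close>
fun stdisj :: "('k \<times> ('a, 'k) wltl) list \<Rightarrow> ('a, 'k::complete_linorder) wltl" where
  "stdisj [] = Const bot"
| "stdisj [(c, \<phi>)] = And (Const c) \<phi>"
| "stdisj ((c, \<phi>) # xs) = Or (And (Const c) \<phi>) (stdisj xs)"

text \<open>The boolean part \<phi>_b = \<Or>_i \<phi>_i.\<close>
fun bdisj :: "('k \<times> ('a, 'k) wltl) list \<Rightarrow> ('a, 'k::complete_linorder) wltl" where
  "bdisj [] = Const bot"
| "bdisj [(c, \<phi>)] = \<phi>"
| "bdisj ((c, \<phi>) # xs) = Or \<phi> (bdisj xs)"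

definition kst :: "'k::complete_linorder \<Rightarrow> ('k \<times> ('a, 'k) wltl) list \<Rightarrow> bool" where
  "kst k xs \<longleftrightarrow> xs \<noteq> [] \<and>
     (\<forall>(c, \<phi>) \<in> set xs. k \<le> c \<and> c \<noteq> bot \<and> c \<noteq> top \<and> sbLTL \<phi>)"

end

theory Submission
  imports Defs
begin

lemma ax:
  assumes "ioggpvm mult Val"
  shows "\<And>f. finite (range f) \<Longrightarrow> f i = bot \<Longrightarrow> Val f = bot"
    and "Val (\<lambda>_. top) = top"
    and "\<And>k. mult bot k = bot" "\<And>k. mult k bot = bot"
    and "\<And>k. mult top k = k" "\<And>k. mult k top = k"
    and "\<And>f k. finite (range f) \<Longrightarrow> (\<forall>i. k \<le> f i) \<Longrightarrow> k \<le> Val f"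
proof -
  note H = assms[unfolded ioggpvm_def]
  note H1 = H[THEN conjunct1] and H2 = H[THEN conjunct2, THEN conjunct1]
   and H3 = H[THEN conjunct2, THEN conjunct2, THEN conjunct1]
   and H4 = H[THEN conjunct2, THEN conjunct2, THEN conjunct2, THEN conjunct1]
   and H9 = H[THEN conjunct2, THEN conjunct2, THEN conjunct2, THEN conjunct2, THEN conjunct2,
              THEN conjunct2, THEN conjunct2, THEN conjunct2]
  show "\<And>f. finite (range f) \<Longrightarrow> f i = bot \<Longrightarrow> Val f = bot" using H1 by blast
  show "Val (\<lambda>_. top) = top" using H2 .
  show "\<And>k. mult bot k = bot" "\<And>k. mult k bot = bot" using H3 by blast+
  show "\<And>k. mult top k = k" "\<And>k. mult k top = k" using H4 by blast+
  show "\<And>f k. finite (range f) \<Longrightarrow> (\<forall>i. k \<le> f i) \<Longrightarrow> k \<le> Val f" using H9 by blast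
qed

lemma bool_sem:
  assumes V: "ioggpvm mult Val"
  shows "sbLTL \<phi> \<Longrightarrow> sem mult Val \<phi> w = (if holds \<phi> w then top else bot)"
proof (induction \<phi> arbitrary: w rule: sbLTL.induct)
  case (5 \<phi> \<psi>)
  then show ?case by (simp add: ax[OF V])
next
  case (7 \<phi> \<psi>)
  have B: "sem mult Val (Box \<phi>) w = (if holds (Box \<phi>) w then top else bot)" for w
  proof -
    have fr: "finite (range (\<lambda>i. sem mult Val \<phi> (sfx i w)))"
      by (rule finite_subset[of _ "{top, bot}"]) (auto simp: 7)
    show ?thesis
    proof (cases "holds (Box \<phi>) w")
      case True
      then have "(\<lambda>i. sem mult Val \<phi> (sfx i w)) = (\<lambda>_. top)" by (auto simp: 7)
      then show ?thesis using True ax(2)[OF V] by simp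
    next
      case False
      then obtain i where "\<not> holds \<phi> (sfx i w)" by auto
      then show ?thesis using False ax(1)[OF V fr, of i] by (auto simp: 7)
    qed
  qed
  have U: "sem mult Val (Until \<phi> \<psi>) w = (if holds (Until \<phi> \<psi>) w then top else bot)"
  proof -
    define s where "s i = (\<lambda>j. if j < i then sem mult Val \<phi> (sfx j w)
                     else if j = i then sem mult Val \<psi> (sfx i w) else top)" for i
    have fr: "finite (range (s i))" for i
      by (rule finite_subset[of _ "{top, bot}"]) (auto simp: 7 s_def)
    have sv: "Val (s i) = (if (\<forall>j<i. holds \<phi> (sfx j w)) \<and> holds \<psi> (sfx i w) then top else bot)" for i
    proof (cases "(\<forall>j<i. holds \<phi> (sfx j w)) \<and> holds \<psi> (sfx i w)")
      case True
      then have "s i = (\<lambda>_. top)" by (auto simp: 7 s_def)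
      then show ?thesis using True ax(2)[OF V] by simp
    next
      case False
      have "\<exists>j\<le>i. s i j = bot"
      proof (cases "\<forall>j<i. holds \<phi> (sfx j w)")
        case True
        then have "s i i = bot" using False by (simp add: 7 s_def)
        then show ?thesis by blast
      next
        case False
        then obtain j where "j < i" "\<not> holds \<phi> (sfx j w)" by blast
        then have "s i j = bot" by (simp add: 7 s_def)
        then show ?thesis using \<open>j < i\<close> less_imp_le by blast
      qed
      then obtain j where "j \<le> i" "s i j = bot" by blast
      then show ?thesis using False ax(1)[OF V fr] by metis
    qed
    have "sem mult Val (Until \<phi> \<psi>) w = (SUP i. Val (s i))" by (simp add: s_def)
    also have "\<dots> = (if holds (Until \<phi> \<psi>) w then top else bot)"
    proof (cases "holds (Until \<phi> \<psi>) w")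
      case True
      then obtain i where "(\<forall>j<i. holds \<phi> (sfx j w)) \<and> holds \<psi> (sfx i w)" by auto
      then have "Val (s i) = top" using sv by simp
      then have "top \<le> (SUP i. Val (s i))" by (metis SUP_upper UNIV_I)
      then have "(SUP i. Val (s i)) = top" by (rule top_le)
      then show ?thesis using True by simp
    next
      case False
      then have "\<And>i. Val (s i) = bot" using sv by auto
      then have "(SUP i. Val (s i)) = bot" by simp
      then show ?thesis using False by (simp only: if_False)
    qed
    finally show ?thesis .
  qed
  show ?case unfolding WUntil_def using B U by (auto simp: WUntil_def)
next
  case (8 \<phi>)
  have fr: "finite (range (\<lambda>i. sem mult Val \<phi> (sfx i w)))"
    by (rule finite_subset[of _ "{top, bot}"]) (auto simp: 8)
  show ?case
  proof (cases "holds (Box \<phi>) w")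
    case True
    then have "(\<lambda>i. sem mult Val \<phi> (sfx i w)) = (\<lambda>_. top)" by (auto simp: 8)
    then show ?thesis using True ax(2)[OF V] by simp
  next
    case False
    then obtain i where "\<not> holds \<phi> (sfx i w)" by auto
    then show ?thesis using False ax(1)[OF V fr, of i] by (auto simp: 8)
  qed
qed auto

lemma stsem:
  assumes V: "ioggpvm mult Val" and kb: "k \<noteq> bot"
  shows "xs \<noteq> [] \<Longrightarrow> (\<forall>(c, \<phi>) \<in> set xs. k \<le> c \<and> c \<noteq> bot \<and> c \<noteq> top \<and> sbLTL \<phi>) \<Longrightarrow>
    sem mult Val (stdisj xs) w \<in> insert bot (fst ` set xs)
    \<and> (holds (bdisj xs) w \<longrightarrow> k \<le> sem mult Val (stdisj xs) w)
    \<and> (\<not> holds (bdisj xs) w \<longrightarrow> sem mult Val (stdisj xs) w = bot)"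
proof (induction xs rule: stdisj.induct)
  case 1
  then show ?case by simp
next
  case (2 c \<phi>)
  then show ?case by (simp add: bool_sem[OF V] ax[OF V])
next
  case (3 c \<phi> y ys)
  have IH: "sem mult Val (stdisj (y # ys)) w \<in> insert bot (fst ` set (y # ys))
    \<and> (holds (bdisj (y # ys)) w \<longrightarrow> k \<le> sem mult Val (stdisj (y # ys)) w)
    \<and> (\<not> holds (bdisj (y # ys)) w \<longrightarrow> sem mult Val (stdisj (y # ys)) w = bot)"
    using 3 by auto
  have c: "k \<le> c" "sbLTL \<phi>" using "3.prems" by auto
  have e: "sem mult Val (And (Const c) \<phi>) w = (if holds \<phi> w then c else bot)"
    by (simp add: bool_sem[OF V c(2)] ax[OF V])
  show ?case using IH c(1) e
    by (auto simp: sup_max max_def le_max_iff_disj)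
qed

lemma main:
  assumes V: "ioggpvm mult Val" and kb: "k \<noteq> bot"
    and fx: "finite Lx" and fy: "finite Ly"
    and A: "\<And>w. sem mult Val a w \<in> Lx \<and> (holds ha w \<longleftrightarrow> k \<le> sem mult Val a w)
               \<and> (\<not> holds ha w \<longrightarrow> sem mult Val a w = bot)"
    and B: "\<And>w. sem mult Val b w \<in> Ly \<and> (holds hb w \<longleftrightarrow> k \<le> sem mult Val b w)
               \<and> (\<not> holds hb w \<longrightarrow> sem mult Val b w = bot)"
  shows "(k \<le> sem mult Val (Box a) w \<longleftrightarrow> holds (Box ha) w)
       \<and> (k \<le> sem mult Val (Until a b) w \<longleftrightarrow> holds (Until ha hb) w)"
proof
  have kb': "\<not> k \<le> bot" using kb by (simp add: bot_unique)
  have fr: "finite (range (\<lambda>i. sem mult Val a (sfx i w)))"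
    by (rule finite_subset[OF _ fx]) (auto simp: A)
  show "k \<le> sem mult Val (Box a) w \<longleftrightarrow> holds (Box ha) w"
  proof (cases "holds (Box ha) w")
    case True
    then have "\<forall>i. k \<le> sem mult Val a (sfx i w)" using A by auto
    then show ?thesis using True ax(7)[OF V fr] by simp
  next
    case False
    then obtain i where "\<not> holds ha (sfx i w)" by auto
    then have "sem mult Val a (sfx i w) = bot" using A by blast
    then have "Val (\<lambda>i. sem mult Val a (sfx i w)) = bot" using ax(1)[OF V fr] by blast
    then show ?thesis using False kb' by simp
  qed
  define s where "s i = (\<lambda>j. if j < i then sem mult Val a (sfx j w)
                     else if j = i then sem mult Val b (sfx i w) else top)" for i
  have fr2: "finite (range (s i))" for i
    by (rule finite_subset[of _ "insert top (Lx \<union> Ly)"]) (auto simp: A B s_def fx fy)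
  have sv1: "k \<le> Val (s i)" if "(\<forall>j<i. holds ha (sfx j w)) \<and> holds hb (sfx i w)" for i
  proof -
    have "\<forall>j. k \<le> s i j" using that A B by (auto simp: s_def)
    then show ?thesis using ax(7)[OF V fr2] by blast
  qed
  have sv2: "Val (s i) = bot" if "\<not> ((\<forall>j<i. holds ha (sfx j w)) \<and> holds hb (sfx i w))" for i
  proof -
    have "\<exists>j\<le>i. s i j = bot"
    proof (cases "\<forall>j<i. holds ha (sfx j w)")
      case True
      then have "\<not> holds hb (sfx i w)" using that by blast
      then have "sem mult Val b (sfx i w) = bot" using B by blast
      then have "s i i = bot" by (simp add: s_def)
      then show ?thesis by blast
    next
      case False
      then obtain j where "j < i" "\<not> holds ha (sfx j w)" by blast
      moreover have "sem mult Val a (sfx j w) = bot" using A \<open>\<not> holds ha (sfx j w)\<close> by blast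
      ultimately have "s i j = bot" by (simp add: s_def)
      then show ?thesis using \<open>j < i\<close> less_imp_le by blast
    qed
    then show ?thesis using ax(1)[OF V fr2] by metis
  qed
  have "sem mult Val (Until a b) w = (SUP i. Val (s i))" by (simp add: s_def)
  moreover have "k \<le> (SUP i. Val (s i)) \<longleftrightarrow> holds (Until ha hb) w"
  proof (cases "holds (Until ha hb) w")
    case True
    then obtain i where "(\<forall>j<i. holds ha (sfx j w)) \<and> holds hb (sfx i w)" by auto
    then have "k \<le> Val (s i)" using sv1 by blast
    also have "\<dots> \<le> (SUP i. Val (s i))" by (rule SUP_upper) simp
    finally show ?thesis using True by simp
  next
    case False
    then have "\<And>i. Val (s i) = bot" using sv2 by auto
    then have "(SUP i. Val (s i)) = bot" by simp
    then show ?thesis using False kb' by simp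
  qed
  ultimately show "k \<le> sem mult Val (Until a b) w \<longleftrightarrow> holds (Until ha hb) w" by simp
qed

theorem lemma7:
  fixes mult :: "'k::complete_linorder \<Rightarrow> 'k \<Rightarrow> 'k"
    and Val :: "(nat \<Rightarrow> 'k) \<Rightarrow> 'k"
    and k :: 'k
    and xs ys :: "('k \<times> ('a::finite, 'k) wltl) list"
    and w :: "nat \<Rightarrow> 'a set"
  assumes "ioggpvm mult Val"
    and "k \<noteq> bot" and "k \<noteq> top"
    and "kst k xs" and "kst k ys"
  shows "(k \<le> sem mult Val (WUntil (stdisj xs) (stdisj ys)) w
            \<longleftrightarrow> holds (WUntil (bdisj xs) (bdisj ys)) w)
       \<and> (k \<le> sem mult Val (Box (stdisj xs)) w
            \<longleftrightarrow> holds (Box (bdisj xs)) w)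
       \<and> (k \<le> sem mult Val (Until (stdisj xs) (stdisj ys)) w
            \<longleftrightarrow> holds (Until (bdisj xs) (bdisj ys)) w)"
proof -
  have V: "ioggpvm mult Val" and kb: "k \<noteq> bot" using assms by auto
  have cx: "xs \<noteq> []" "\<forall>(c, \<phi>) \<in> set xs. k \<le> c \<and> c \<noteq> bot \<and> c \<noteq> top \<and> sbLTL \<phi>"
    using assms(4) unfolding kst_def by auto
  have cy: "ys \<noteq> []" "\<forall>(c, \<phi>) \<in> set ys. k \<le> c \<and> c \<noteq> bot \<and> c \<noteq> top \<and> sbLTL \<phi>"
    using assms(5) unfolding kst_def by auto
  have kb': "\<not> k \<le> bot" using kb by (simp add: bot_unique)
  have A: "\<And>w. sem mult Val (stdisj xs) w \<in> insert bot (fst ` set xs)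
     \<and> (holds (bdisj xs) w \<longleftrightarrow> k \<le> sem mult Val (stdisj xs) w)
     \<and> (\<not> holds (bdisj xs) w \<longrightarrow> sem mult Val (stdisj xs) w = bot)"
    using stsem[OF V kb cx] kb' by metis
  have B: "\<And>w. sem mult Val (stdisj ys) w \<in> insert bot (fst ` set ys)
     \<and> (holds (bdisj ys) w \<longleftrightarrow> k \<le> sem mult Val (stdisj ys) w)
     \<and> (\<not> holds (bdisj ys) w \<longrightarrow> sem mult Val (stdisj ys) w = bot)"
    using stsem[OF V kb cy] kb' by metis
  note M = main[OF V kb _ _ A B, of w]
  show ?thesis using M by (auto simp: WUntil_def sup_max le_max_iff_disj)
qed

end
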